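(* Let $X$ be a compact metric space and $f\colon X\to X$ a continuous map. Assume there is a sequence of closed sets $X_1\subseteq X_2\subseteq\cdots$ in $X$ with $f(X_i)\subseteq X_i$ for all $i$, $X=\bigcup_{i=1}^\infty X_i$, and $f|_{X_i}\colon X_i\to X_i$ generically chaotic for every $i$. Then $f$ is generically chaotic.
   Context: For continuous $g$ on a compact metric space $(Y,d)$, $(x,y)\in Y^2$ is a Li-Yorke pair if $\liminf_n d(g^n(x),g^n(y))=0$ and $\limsup_n d(g^n(x),g^n(y))>0$; $g$ is generically chaotic if the set of Li-Yorke pairs is residual in $Y^2$. *)

theory Defs
  imports "HOL-Analysis.Analysis" "HOL-Library.Liminf_Limsup"
begin

definition li_yorke_pair :: "('a::metric_space \<Rightarrow> 'a) \<Rightarrow> 'a \<Rightarrow> 'a \<Rightarrow> bool" where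
  "li_yorke_pair g x y \<longleftrightarrow>
     liminf (\<lambda>n. ereal (dist ((g ^^ n) x) ((g ^^ n) y))) = 0 \<and>
     limsup (\<lambda>n. ereal (dist ((g ^^ n) x) ((g ^^ n) y))) > 0"

definition residual_in :: "'b::topological_space set \<Rightarrow> 'b set \<Rightarrow> bool" where
  "residual_in Z S \<longleftrightarrow> S \<subseteq> Z \<and>
     (\<exists>\<F>. countable \<F> \<and> (\<forall>U\<in>\<F>. openin (top_of_set Z) U \<and> Z \<subseteq> closure U)
          \<and> Z \<inter> \<Inter>\<F> \<subseteq> S)"

definition generically_chaotic_on :: "'a::metric_space set \<Rightarrow> ('a \<Rightarrow> 'a) \<Rightarrow> bool" where
  "generically_chaotic_on Y g \<longleftrightarrow>
     residual_in (Y \<times> Y) {(x, y). x \<in> Y \<and> y \<in> Y \<and> li_yorke_pair g x y}"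

end

theory Submission
  imports Defs
begin

theorem lemma34:
  fixes X :: "'a::metric_space set" and f :: "'a \<Rightarrow> 'a" and Xs :: "nat \<Rightarrow> 'a set"
  assumes "compact X"
    and "continuous_on X f" and "f ` X \<subseteq> X"
    and "\<And>i. closed (Xs i)" and "\<And>i. Xs i \<subseteq> X"
    and "\<And>i. Xs i \<subseteq> Xs (Suc i)"
    and "\<And>i. f ` (Xs i) \<subseteq> Xs i"
    and "X = (\<Union>i. Xs i)"
    and "\<And>i. generically_chaotic_on (Xs i) f"
  shows "generically_chaotic_on X f"
proof -
  let ?LY = "\<lambda>Z. {(x, y). x \<in> Z \<and> y \<in> Z \<and> li_yorke_pair f x y}"
  have "\<forall>i. \<exists>F. countable F \<and> (\<forall>U\<in>F. openin (top_of_set (Xs i \<times> Xs i)) U \<and> Xs i \<times> Xs i \<subseteq> closure U)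
          \<and> (Xs i \<times> Xs i) \<inter> \<Inter>F \<subseteq> ?LY (Xs i)"
    using assms(9) unfolding generically_chaotic_on_def residual_in_def by blast
  then obtain FF where FF0: "\<forall>i. countable (FF i) \<and> (\<forall>U\<in>FF i. openin (top_of_set (Xs i \<times> Xs i)) U \<and> Xs i \<times> Xs i \<subseteq> closure U)
          \<and> (Xs i \<times> Xs i) \<inter> \<Inter>(FF i) \<subseteq> ?LY (Xs i)"
    by (rule choice[THEN exE])
  have FF: "\<And>i. countable (FF i)"
    "\<And>i U. U \<in> FF i \<Longrightarrow> openin (top_of_set (Xs i \<times> Xs i)) U \<and> Xs i \<times> Xs i \<subseteq> closure U"
    "\<And>i. (Xs i \<times> Xs i) \<inter> \<Inter>(FF i) \<subseteq> ?LY (Xs i)"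
    using FF0 by blast+
  define G where "G = (\<Union>i. (\<lambda>V. V \<union> ((X \<times> X) - (Xs i \<times> Xs i))) ` FF i)"
  have mono: "i \<le> j \<Longrightarrow> Xs i \<subseteq> Xs j" for i j
    by (rule lift_Suc_mono_le[of Xs]) (use assms(6) in auto)
  have "countable G" unfolding G_def using FF(1) by auto
  moreover have "openin (top_of_set (X \<times> X)) U \<and> X \<times> X \<subseteq> closure U" if UG: "U \<in> G" for U
  proof -
    obtain i V where V: "V \<in> FF i" and U: "U = V \<union> ((X \<times> X) - (Xs i \<times> Xs i))"
      using UG unfolding G_def by blast
    from FF(2)[OF V] obtain Op where Op: "open Op" "V = (Xs i \<times> Xs i) \<inter> Op"
      and cl: "Xs i \<times> Xs i \<subseteq> closure V"
      by (auto simp: openin_open)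
    have sub: "Xs i \<times> Xs i \<subseteq> X \<times> X" using assms(5) by auto
    have "U = (X \<times> X) \<inter> (Op \<union> - (Xs i \<times> Xs i))"
      using U Op sub by auto
    moreover have "open (Op \<union> - (Xs i \<times> Xs i))"
      using Op(1) assms(4) by (intro open_Un open_Compl closed_Times) auto
    ultimately have "openin (top_of_set (X \<times> X)) U" by (auto simp: openin_open)
    moreover have "X \<times> X \<subseteq> closure U"
    proof
      fix p assume p: "p \<in> X \<times> X"
      show "p \<in> closure U"
      proof (cases "p \<in> Xs i \<times> Xs i")
        case True
        then have "p \<in> closure V" using cl by auto
        moreover have "closure V \<subseteq> closure U" using U by (intro closure_mono) auto
        ultimately show ?thesis by auto
      next
        case False
        then have "p \<in> U" using p U by blast
        then show ?thesis using closure_subset by blast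
      qed
    qed
    ultimately show ?thesis by auto
  qed
  moreover have "(X \<times> X) \<inter> \<Inter>G \<subseteq> ?LY X"
  proof
    fix p assume p: "p \<in> (X \<times> X) \<inter> \<Inter>G"
    obtain x y where xy: "p = (x, y)" by (cases p)
    have "x \<in> X" "y \<in> X" using p xy by auto
    then obtain i j where "x \<in> Xs i" "y \<in> Xs j" unfolding assms(8) by blast
    then have inx: "x \<in> Xs (max i j)" "y \<in> Xs (max i j)"
      using mono[of i "max i j"] mono[of j "max i j"] by auto
    let ?k = "max i j"
    have "p \<in> \<Inter>(FF ?k)"
    proof
      fix V assume V: "V \<in> FF ?k"
      have "V \<union> ((X \<times> X) - (Xs ?k \<times> Xs ?k)) \<in> G" unfolding G_def using V by auto
      then have "p \<in> V \<union> ((X \<times> X) - (Xs ?k \<times> Xs ?k))" using p by auto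
      then show "p \<in> V" using inx xy by auto
    qed
    then have "p \<in> ?LY (Xs ?k)" using FF(3)[of ?k] inx xy by auto
    then show "p \<in> ?LY X" using assms(5)[of ?k] by auto
  qed
  moreover have "?LY X \<subseteq> X \<times> X" by auto
  ultimately show ?thesis
    unfolding generically_chaotic_on_def residual_in_def by blast
qed

end
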